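(* Let $S\in\{0,1\}^{n\times n}$ be a symmetric binary matrix. Then the problem $$\min_{R\in\mathcal{R}^n} \; \sum_{i,j=1}^n |R_{ij}-S_{ij}|$$ admits an optimal solution $R\in\{0,1\}^{n\times n}$.
   Context: A real matrix $R\in\mathbb{R}^{n\times n}$ is a strong-R-matrix (strong Robinson matrix) if it is symmetric and satisfies $R_{ij}\le R_{kl}$ for all $(i,j,k,l)$ with $|i-j|\ge|k-l|$. $\mathcal{R}^n$ denotes the set of $n\times n$ strong-R-matrices. *)

theory Defs
  imports Complex_Main
begin

text \<open>n x n real matrices are represented as functions nat => nat => real,
  with indices ranging over {0..<n}; entries outside are irrelevant.\<close>

definition strong_R_matrix :: "nat \<Rightarrow> (nat \<Rightarrow> nat \<Rightarrow> real) \<Rightarrow> bool" where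
  "strong_R_matrix n R \<longleftrightarrow>
     (\<forall>i<n. \<forall>j<n. R i j = R j i) \<and>
     (\<forall>i<n. \<forall>j<n. \<forall>k<n. \<forall>l<n.
        nat \<bar>int i - int j\<bar> \<ge> nat \<bar>int k - int l\<bar> \<longrightarrow> R i j \<le> R k l)"

definition l1_dist :: "nat \<Rightarrow> (nat \<Rightarrow> nat \<Rightarrow> real) \<Rightarrow> (nat \<Rightarrow> nat \<Rightarrow> real) \<Rightarrow> real" where
  "l1_dist n R S = (\<Sum>i<n. \<Sum>j<n. \<bar>R i j - S i j\<bar>)"

end

theory Submission
  imports Defs
begin

definition clip :: "real \<Rightarrow> real" where "clip x = min 1 (max 0 x)"

definition Bm :: "nat \<Rightarrow> nat \<Rightarrow> nat \<Rightarrow> real" where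
  "Bm m i j = (if nat \<bar>int i - int j\<bar> < m then 1 else 0)"

lemma Bm_strong: "strong_R_matrix n (Bm m)"
  unfolding strong_R_matrix_def Bm_def by auto

lemma strong_dist:
  assumes "strong_R_matrix n R" "i < n" "j < n"
  shows "R i j = R (nat \<bar>int i - int j\<bar>) 0"
proof -
  let ?d = "nat \<bar>int i - int j\<bar>"
  have d: "?d < n" using assms by auto
  have A: "\<forall>i<n. \<forall>j<n. \<forall>k<n. \<forall>l<n.
        nat \<bar>int i - int j\<bar> \<ge> nat \<bar>int k - int l\<bar> \<longrightarrow> R i j \<le> R k l"
    using assms(1) unfolding strong_R_matrix_def by blast
  have n0: "0 < n" using assms by auto
  have "R i j \<le> R ?d 0" using A assms(2,3) d n0 by auto
  moreover have "R ?d 0 \<le> R i j" using A assms(2,3) d n0 by auto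
  ultimately show ?thesis by linarith
qed

lemma strong_mono:
  assumes "strong_R_matrix n R" "Suc d < n"
  shows "R (Suc d) 0 \<le> R d 0"
  using assms unfolding strong_R_matrix_def by auto

lemma entry_ineq:
  fixes lam b :: "nat \<Rightarrow> real"
  assumes s: "s \<in> {0, 1}" and l1: "(\<Sum>m\<in>M. lam m) = 1"
    and lb: "(\<Sum>m\<in>M. lam m * b m) = clip x"
    and b01: "\<forall>m\<in>M. b m \<in> {0, 1}"
  shows "(\<Sum>m\<in>M. lam m * \<bar>b m - s\<bar>) \<le> \<bar>x - s\<bar>"
proof (cases "s = 0")
  case True
  have "(\<Sum>m\<in>M. lam m * \<bar>b m - s\<bar>) = (\<Sum>m\<in>M. lam m * b m)"
    using b01 True by (intro sum.cong) auto
  then show ?thesis using lb True unfolding clip_def by auto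
next
  case False
  then have s1: "s = 1" using s by auto
  have "(\<Sum>m\<in>M. lam m * \<bar>b m - s\<bar>) = (\<Sum>m\<in>M. lam m - lam m * b m)"
    using b01 s1 by (intro sum.cong) auto
  also have "\<dots> = 1 - clip x" using l1 lb by (simp add: sum_subtractf)
  finally show ?thesis using s1 unfolding clip_def by auto
qed

lemma telesc: "k \<le> Suc n \<Longrightarrow> (\<Sum>m\<in>{k..n}. (G m - G (Suc m) :: real)) = G k - G (Suc n)"
proof (induction n)
  case 0
  then show ?case by (cases k) auto
next
  case (Suc n)
  show ?case
  proof (cases "k = Suc (Suc n)")
    case True then show ?thesis by simp
  next
    case False
    then have "k \<le> Suc n" using Suc.prems by auto
    then have "{k..Suc n} = insert (Suc n) {k..n}" by auto
    then show ?thesis using Suc.IH \<open>k \<le> Suc n\<close> by simp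
  qed
qed

theorem lemma1:
  fixes n :: nat and S :: "nat \<Rightarrow> nat \<Rightarrow> real"
  assumes binS: "\<forall>i<n. \<forall>j<n. S i j \<in> {0, 1}"
    and symS: "\<forall>i<n. \<forall>j<n. S i j = S j i"
  shows "\<exists>R. strong_R_matrix n R \<and> (\<forall>i<n. \<forall>j<n. R i j \<in> {0, 1}) \<and>
             (\<forall>R'. strong_R_matrix n R' \<longrightarrow> l1_dist n R S \<le> l1_dist n R' S)"
proof -
  let ?c = "\<lambda>m. l1_dist n (Bm m) S"
  define C where "C = Min (?c ` {0..n})"
  have "C \<in> ?c ` {0..n}" unfolding C_def by (intro Min_in) auto
  then obtain m0 where m0: "m0 \<in> {0..n}" "?c m0 = C" by auto
  have Cle: "\<And>m. m \<in> {0..n} \<Longrightarrow> C \<le> ?c m" unfolding C_def by (intro Min_le) auto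
  have main: "C \<le> l1_dist n R' S" if sR: "strong_R_matrix n R'" for R'
  proof -
    define G where "G k = (if k = 0 then 1 else if k - 1 < n then clip (R' (k - 1) 0) else 0)" for k
    define lam where "lam m = G m - G (Suc m)" for m
    have Gmono: "G (Suc m) \<le> G m" for m
    proof (cases m)
      case 0 then show ?thesis unfolding G_def clip_def by auto
    next
      case (Suc d)
      show ?thesis
      proof (cases "Suc d < n")
        case True
        then have "R' (Suc d) 0 \<le> R' d 0" using strong_mono[OF sR] by auto
        then show ?thesis using Suc True unfolding G_def clip_def by auto
      next
        case False
        then show ?thesis using Suc unfolding G_def clip_def by auto
      qed
    qed
    have lam0: "lam m \<ge> 0" for m using Gmono[of m] unfolding lam_def by auto
    have lsum: "(\<Sum>m\<in>{0..n}. lam m) = 1"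
      unfolding lam_def by (subst telesc) (auto simp: G_def)
    have entry: "(\<Sum>m\<in>{0..n}. lam m * \<bar>Bm m i j - S i j\<bar>) \<le> \<bar>R' i j - S i j\<bar>"
      if ij: "i < n" "j < n" for i j
    proof (rule entry_ineq)
      show "S i j \<in> {0, 1}" using binS ij by auto
      show "(\<Sum>m\<in>{0..n}. lam m) = 1" by (rule lsum)
      show "\<forall>m\<in>{0..n}. Bm m i j \<in> {0, 1}" unfolding Bm_def by auto
      let ?d = "nat \<bar>int i - int j\<bar>"
      have d: "?d < n" using ij by auto
      have "(\<Sum>m\<in>{0..n}. lam m * Bm m i j) = (\<Sum>m\<in>{0..n}. if ?d < m then lam m else 0)"
        unfolding Bm_def by (intro sum.cong) auto
      also have "\<dots> = (\<Sum>m\<in>{0..n} \<inter> {m. ?d < m}. lam m)"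
        by (simp add: sum.inter_restrict)
      also have "{0..n} \<inter> {m. ?d < m} = {Suc ?d..n}" by auto
      also have "(\<Sum>m\<in>{Suc ?d..n}. lam m) = G (Suc ?d) - G (Suc n)"
        unfolding lam_def using d by (subst telesc) auto
      also have "\<dots> = clip (R' i j)"
        using d strong_dist[OF sR ij] unfolding G_def by auto
      finally show "(\<Sum>m\<in>{0..n}. lam m * Bm m i j) = clip (R' i j)" .
    qed
    have "C = (\<Sum>m\<in>{0..n}. lam m * C)" using lsum by (simp add: sum_distrib_right[symmetric])
    also have "\<dots> \<le> (\<Sum>m\<in>{0..n}. lam m * ?c m)"
      by (intro sum_mono mult_left_mono Cle lam0) auto
    also have "\<dots> = (\<Sum>i<n. \<Sum>j<n. \<Sum>m\<in>{0..n}. lam m * \<bar>Bm m i j - S i j\<bar>)"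
      unfolding l1_dist_def sum_distrib_left
      by (simp add: sum.swap[of _ "{0..n}"])
    also have "\<dots> \<le> l1_dist n R' S"
      unfolding l1_dist_def
    proof (rule sum_mono)
      fix i assume "i \<in> {..<n}"
      then show "(\<Sum>j<n. \<Sum>m\<in>{0..n}. lam m * \<bar>Bm m i j - S i j\<bar>) \<le> (\<Sum>j<n. \<bar>R' i j - S i j\<bar>)"
        by (intro sum_mono entry) auto
    qed
    finally show ?thesis .
  qed
  have "\<forall>i<n. \<forall>j<n. Bm m0 i j \<in> {0, 1}" unfolding Bm_def by auto
  then show ?thesis using Bm_strong main m0 by metis
qed

end
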